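(* Let $B$ be a skew left brace with associated solution $r_B(a,b)=(\lambda_a(b),\lambda_a(b)^{-1}ab)$, and let $I$ be a proper ideal of $B$ such that $B/I$ is an abelian brace. Let $\mathcal P$ be the set of all left cosets $bI$ ($b\in B$) of $I$ in $B$. Then $(B,r_B)$ is uniformly $\mathcal P$-decomposable, i.e. $r_B(bI\times b'I)=b'I\times bI$ for all $b,b'\in B$. In particular, if $B$ is finite and $|B:I|=n$, then $(B,r_B)$ is uniformly $n$-decomposable.
   Context: A skew left brace (brace) is a set $B$ with two group structures $(B,+)$ and $(B,\cdot)$ with $a(b+c)=ab-a+ac$; $\lambda_a(b)=-a+ab$. An ideal is a subset that is a normal subgroup of both groups and $\lambda_b$-invariant for all $b$ (so its left cosets with respect to $\cdot$ and $+$ coincide). A brace is abelian if $xy=x+y=y+x$ for all elements. A partition is uniform if all blocks have the same cardinality. For a partition $\mathcal P=\{X_i\}$ of $X$, a solution $(X,r)$ is uniformly $\mathcal P$-decomposable if $\mathcal P$ is uniform and $r(X_i\times X_j)=X_j\times X_i$ for all $i,j$; it is uniformly $n$-decomposable if this holds for some uniform partition into $n\ge2$ blocks. *)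

theory Defs
  imports "HOL-Algebra.Algebra" "HOL-Library.Disjoint_Sets" "HOL-Library.Equipollence"
begin

text \<open>A skew left brace: a carrier with an additive group A (written with the
HOL-Algebra product of A) and a multiplicative group M on the same carrier, satisfying
a(b+c) = ab - a + ac.\<close>
definition skew_brace :: "'a monoid \<Rightarrow> 'a monoid \<Rightarrow> bool" where
  "skew_brace A M \<longleftrightarrow> group A \<and> group M \<and> carrier A = carrier M \<and>
     (\<forall>a\<in>carrier A. \<forall>b\<in>carrier A. \<forall>c\<in>carrier A.
        a \<otimes>\<^bsub>M\<^esub> (b \<otimes>\<^bsub>A\<^esub> c)
          = ((a \<otimes>\<^bsub>M\<^esub> b) \<otimes>\<^bsub>A\<^esub> inv\<^bsub>A\<^esub> a) \<otimes>\<^bsub>A\<^esub> (a \<otimes>\<^bsub>M\<^esub> c))"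

definition brace_lambda :: "'a monoid \<Rightarrow> 'a monoid \<Rightarrow> 'a \<Rightarrow> 'a \<Rightarrow> 'a" where
  "brace_lambda A M a b = inv\<^bsub>A\<^esub> a \<otimes>\<^bsub>A\<^esub> (a \<otimes>\<^bsub>M\<^esub> b)"

definition brace_solution :: "'a monoid \<Rightarrow> 'a monoid \<Rightarrow> 'a \<times> 'a \<Rightarrow> 'a \<times> 'a" where
  "brace_solution A M = (\<lambda>(a, b).
     (brace_lambda A M a b,
      (inv\<^bsub>M\<^esub> (brace_lambda A M a b) \<otimes>\<^bsub>M\<^esub> a) \<otimes>\<^bsub>M\<^esub> b))"

definition brace_ideal :: "'a monoid \<Rightarrow> 'a monoid \<Rightarrow> 'a set \<Rightarrow> bool" where
  "brace_ideal A M I \<longleftrightarrow> normal I A \<and> normal I M \<and>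
     (\<forall>b\<in>carrier A. brace_lambda A M b ` I \<subseteq> I)"

definition abelian_brace :: "'a monoid \<Rightarrow> 'a monoid \<Rightarrow> bool" where
  "abelian_brace A M \<longleftrightarrow> (\<forall>x\<in>carrier A. \<forall>y\<in>carrier A.
     x \<otimes>\<^bsub>M\<^esub> y = x \<otimes>\<^bsub>A\<^esub> y \<and> x \<otimes>\<^bsub>A\<^esub> y = y \<otimes>\<^bsub>A\<^esub> x)"

definition uniform_partition :: "'a set \<Rightarrow> 'a set set \<Rightarrow> bool" where
  "uniform_partition S Q \<longleftrightarrow> partition_on S Q \<and> (\<forall>U\<in>Q. \<forall>V\<in>Q. eqpoll U V)"

definition uniformly_P_decomposable ::
    "'a set \<Rightarrow> ('a \<times> 'a \<Rightarrow> 'a \<times> 'a) \<Rightarrow> 'a set set \<Rightarrow> bool" where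
  "uniformly_P_decomposable S f Q \<longleftrightarrow> uniform_partition S Q \<and>
     (\<forall>U\<in>Q. \<forall>V\<in>Q. f ` (U \<times> V) = V \<times> U)"

definition uniformly_n_decomposable ::
    "'a set \<Rightarrow> ('a \<times> 'a \<Rightarrow> 'a \<times> 'a) \<Rightarrow> nat \<Rightarrow> bool" where
  "uniformly_n_decomposable S f n \<longleftrightarrow> n \<ge> 2 \<and>
     (\<exists>Q. finite Q \<and> card Q = n \<and> uniformly_P_decomposable S f Q)"

end

theory Submission imports Defs begin

locale bctx =
  fixes A M :: "'a monoid" and I :: "'a set"
  assumes sb: "skew_brace A M" and id: "brace_ideal A M I"
    and ab: "abelian_brace (A Mod I) (M Mod I)"
begin

lemma gA: "group A" and gM: "group M" and cAM: "carrier M = carrier A"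
  and br: "\<And>a b c. a\<in>carrier A \<Longrightarrow> b\<in>carrier A \<Longrightarrow> c\<in>carrier A \<Longrightarrow>
        a \<otimes>\<^bsub>M\<^esub> (b \<otimes>\<^bsub>A\<^esub> c)
          = ((a \<otimes>\<^bsub>M\<^esub> b) \<otimes>\<^bsub>A\<^esub> inv\<^bsub>A\<^esub> a) \<otimes>\<^bsub>A\<^esub> (a \<otimes>\<^bsub>M\<^esub> c)"
  using sb unfolding skew_brace_def by auto

lemma nA: "normal I A" and nM: "normal I M"
  and lamI: "\<And>b i. b \<in> carrier A \<Longrightarrow> i \<in> I \<Longrightarrow> brace_lambda A M b i \<in> I"
  using id unfolding brace_ideal_def by auto

sublocale A: group A by (rule gA)
sublocale M: group M by (rule gM)
sublocale NA: normal I A by (rule nA)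
sublocale NM: normal I M by (rule nM)

lemma ones: "\<one>\<^bsub>M\<^esub> = \<one>\<^bsub>A\<^esub>"
proof -
  have o: "\<one>\<^bsub>M\<^esub> \<in> carrier A" using cAM by (metis M.one_closed)
  have "\<one>\<^bsub>M\<^esub> \<otimes>\<^bsub>M\<^esub> (\<one>\<^bsub>A\<^esub> \<otimes>\<^bsub>A\<^esub> \<one>\<^bsub>A\<^esub>)
     = ((\<one>\<^bsub>M\<^esub> \<otimes>\<^bsub>M\<^esub> \<one>\<^bsub>A\<^esub>) \<otimes>\<^bsub>A\<^esub> inv\<^bsub>A\<^esub> \<one>\<^bsub>M\<^esub>) \<otimes>\<^bsub>A\<^esub> (\<one>\<^bsub>M\<^esub> \<otimes>\<^bsub>M\<^esub> \<one>\<^bsub>A\<^esub>)"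
    using br o by blast
  hence "\<one>\<^bsub>A\<^esub> = inv\<^bsub>A\<^esub> \<one>\<^bsub>M\<^esub>" using o cAM by simp
  thus ?thesis using o by (metis A.inv_inv A.inv_one)
qed


lemma lcosM_sub: assumes x: "x \<in> carrier A" shows "x <#\<^bsub>M\<^esub> I \<subseteq> x <#\<^bsub>A\<^esub> I"
proof
  fix y assume "y \<in> x <#\<^bsub>M\<^esub> I"
  then obtain i where i: "i \<in> I" "y = x \<otimes>\<^bsub>M\<^esub> i" unfolding l_coset_def by auto
  have ic: "i \<in> carrier A" using i NA.subset by auto
  have "x \<otimes>\<^bsub>M\<^esub> i \<in> carrier A" using x ic cAM by (metis M.m_closed)
  hence "y = x \<otimes>\<^bsub>A\<^esub> brace_lambda A M x i"
    using i x unfolding brace_lambda_def by (simp add: A.m_assoc[symmetric])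
  thus "y \<in> x <#\<^bsub>A\<^esub> I" using lamI[OF x i(1)] unfolding l_coset_def by auto
qed

lemma lcosA_sub: assumes x: "x \<in> carrier A" shows "x <#\<^bsub>A\<^esub> I \<subseteq> x <#\<^bsub>M\<^esub> I"
proof
  fix y assume "y \<in> x <#\<^bsub>A\<^esub> I"
  then obtain i where i: "i \<in> I" "y = x \<otimes>\<^bsub>A\<^esub> i" unfolding l_coset_def by auto
  have ic: "i \<in> carrier A" using i NA.subset by auto
  define z where "z = inv\<^bsub>M\<^esub> x"
  have z: "z \<in> carrier A" using x cAM unfolding z_def by (metis M.inv_closed)
  have "z \<otimes>\<^bsub>M\<^esub> (x \<otimes>\<^bsub>A\<^esub> i) = ((z \<otimes>\<^bsub>M\<^esub> x) \<otimes>\<^bsub>A\<^esub> inv\<^bsub>A\<^esub> z) \<otimes>\<^bsub>A\<^esub> (z \<otimes>\<^bsub>M\<^esub> i)"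
    using br z x ic by blast
  also have "\<dots> = brace_lambda A M z i"
  proof -
    have "z \<otimes>\<^bsub>M\<^esub> x = \<one>\<^bsub>A\<^esub>" unfolding z_def using x cAM ones by simp
    moreover have "z \<otimes>\<^bsub>M\<^esub> i \<in> carrier A" using z ic cAM by (metis M.m_closed)
    ultimately show ?thesis using z by (simp add: z_def brace_lambda_def)
  qed
  finally have e: "z \<otimes>\<^bsub>M\<^esub> y = brace_lambda A M z i" using i by simp
  have yc: "y \<in> carrier A" using i x ic by simp
  have "y = x \<otimes>\<^bsub>M\<^esub> (z \<otimes>\<^bsub>M\<^esub> y)" unfolding z_def using x yc cAM
    by (metis M.inv_closed M.m_assoc M.r_inv M.l_one)
  thus "y \<in> x <#\<^bsub>M\<^esub> I" using e lamI[OF z i(1)] unfolding l_coset_def by auto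
qed

lemma cos: assumes x: "x \<in> carrier A" shows "I #>\<^bsub>M\<^esub> x = I #>\<^bsub>A\<^esub> x"
  and "x <#\<^bsub>M\<^esub> I = I #>\<^bsub>A\<^esub> x"
proof -
  have "x <#\<^bsub>M\<^esub> I = x <#\<^bsub>A\<^esub> I" using lcosM_sub lcosA_sub x by blast
  thus "I #>\<^bsub>M\<^esub> x = I #>\<^bsub>A\<^esub> x" "x <#\<^bsub>M\<^esub> I = I #>\<^bsub>A\<^esub> x"
    using NA.coset_eq NM.coset_eq x cAM by auto
qed


definition p where "p x = I #>\<^bsub>A\<^esub> x"

lemma gQ: "group (A Mod I)" by (rule NA.factorgroup_is_group)

lemma carQ: "carrier (M Mod I) = carrier (A Mod I)"
  unfolding carrier_FactGroup using cos(1) cAM by auto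

lemma pc: "x \<in> carrier A \<Longrightarrow> p x \<in> carrier (A Mod I)"
  unfolding p_def carrier_FactGroup by auto


lemma abQ: assumes "U \<in> carrier (A Mod I)" "V \<in> carrier (A Mod I)"
  shows "set_mult M U V = U \<otimes>\<^bsub>A Mod I\<^esub> V" "U \<otimes>\<^bsub>A Mod I\<^esub> V = V \<otimes>\<^bsub>A Mod I\<^esub> U"
  using ab assms carQ unfolding abelian_brace_def by simp_all

lemma pA: "group_hom A (A Mod I) p"
  unfolding group_hom_def group_hom_axioms_def
  using gA gQ NA.r_coset_hom_Mod by (simp add: p_def[abs_def])

lemma pM: "group_hom M (A Mod I) p"
proof -
  have "p \<in> hom M (A Mod I)"
  proof (rule homI)
    fix x assume "x \<in> carrier M" thus "p x \<in> carrier (A Mod I)" using pc cAM by simp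
  next
    fix x y assume xy: "x \<in> carrier M" "y \<in> carrier M"
    have "p (x \<otimes>\<^bsub>M\<^esub> y) = I #>\<^bsub>M\<^esub> (x \<otimes>\<^bsub>M\<^esub> y)"
      unfolding p_def using cos(1) xy cAM by (metis M.m_closed)
    also have "\<dots> = set_mult M (I #>\<^bsub>M\<^esub> x) (I #>\<^bsub>M\<^esub> y)"
      using NM.rcos_sum xy by simp
    also have "\<dots> = set_mult M (p x) (p y)" unfolding p_def using cos(1) xy cAM by simp
    also have "\<dots> = p x \<otimes>\<^bsub>A Mod I\<^esub> p y" using abQ pc xy cAM by simp
    finally show "p (x \<otimes>\<^bsub>M\<^esub> y) = p x \<otimes>\<^bsub>A Mod I\<^esub> p y" .
  qed
  thus ?thesis unfolding group_hom_def group_hom_axioms_def using gM gQ by simp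
qed

lemma cQ: "comm_group (A Mod I)"
  using group.group_comm_groupI[OF gQ] abQ(2) by blast

sublocale Qc: comm_group "A Mod I" by (rule cQ)
sublocale PA: group_hom A "A Mod I" p by (rule pA)
sublocale PM: group_hom M "A Mod I" p by (rule pM)

lemma mem_iff: assumes x: "x \<in> carrier A" shows "y \<in> x <#\<^bsub>M\<^esub> I \<longleftrightarrow> y \<in> carrier A \<and> p y = p x"
proof -
  have e: "x <#\<^bsub>M\<^esub> I = I #>\<^bsub>A\<^esub> x" using cos(2) x .
  show ?thesis unfolding e p_def
    using A.repr_independence[OF _ x NA.subgroup_axioms] A.rcos_self[OF _ NA.subgroup_axioms]
      NA.elemrcos_carrier[OF gA x] by metis
qed


lemma cM: "x \<in> carrier A \<Longrightarrow> y \<in> carrier A \<Longrightarrow> x \<otimes>\<^bsub>M\<^esub> y \<in> carrier A"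
  using cAM M.m_closed by metis
lemma iM: "x \<in> carrier A \<Longrightarrow> inv\<^bsub>M\<^esub> x \<in> carrier A"
  using cAM M.inv_closed by metis
lemma pMm: "x \<in> carrier A \<Longrightarrow> y \<in> carrier A \<Longrightarrow> p (x \<otimes>\<^bsub>M\<^esub> y) = p x \<otimes>\<^bsub>A Mod I\<^esub> p y"
  using cAM PM.hom_mult by metis
lemma pMi: "x \<in> carrier A \<Longrightarrow> p (inv\<^bsub>M\<^esub> x) = inv\<^bsub>A Mod I\<^esub> p x"
  using cAM PM.hom_inv by metis
lemmas pAm = PA.hom_mult and pAi = PA.hom_inv

lemma fwd: assumes a: "a \<in> carrier A" and b: "b \<in> carrier A"
  and p: "p a = p a0" "p b = p b0"
  shows "p (brace_lambda A M a b) = p b0"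
    "p ((inv\<^bsub>M\<^esub> (brace_lambda A M a b) \<otimes>\<^bsub>M\<^esub> a) \<otimes>\<^bsub>M\<^esub> b) = p a0"
proof -
  have pa: "p a \<in> carrier (A Mod I)" and pb: "p b \<in> carrier (A Mod I)" using pc a b by auto
  have lc: "brace_lambda A M a b \<in> carrier A" unfolding brace_lambda_def using a b cM by simp
  have 1: "p (brace_lambda A M a b) = p b" unfolding brace_lambda_def
    using a b pa pb by (simp add: cM pAm pAi pMm Qc.m_assoc[symmetric] del: mult_FactGroup one_FactGroup)
  thus "p (brace_lambda A M a b) = p b0" using p by simp
  have "p ((inv\<^bsub>M\<^esub> (brace_lambda A M a b) \<otimes>\<^bsub>M\<^esub> a) \<otimes>\<^bsub>M\<^esub> b)
     = inv\<^bsub>A Mod I\<^esub> p b \<otimes>\<^bsub>A Mod I\<^esub> p a \<otimes>\<^bsub>A Mod I\<^esub> p b"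
    using a b lc 1 by (simp add: cM iM pMm pMi del: mult_FactGroup one_FactGroup)
  also have "\<dots> = p a" using pa pb
    by (metis Qc.inv_closed Qc.m_assoc Qc.m_comm Qc.r_inv Qc.r_one Qc.m_closed)
  finally show "p ((inv\<^bsub>M\<^esub> (brace_lambda A M a b) \<otimes>\<^bsub>M\<^esub> a) \<otimes>\<^bsub>M\<^esub> b) = p a0" using p by simp
qed


lemma bwd: assumes y: "y \<in> carrier A" and x: "x \<in> carrier A"
  defines "w \<equiv> y \<otimes>\<^bsub>M\<^esub> x"
  defines "a0 \<equiv> w \<otimes>\<^bsub>A\<^esub> inv\<^bsub>A\<^esub> y"
  defines "b0 \<equiv> inv\<^bsub>M\<^esub> a0 \<otimes>\<^bsub>M\<^esub> w"
  shows "a0 \<in> carrier A" "b0 \<in> carrier A" "p a0 = p x" "p b0 = p y"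
    "brace_solution A M (a0, b0) = (y, x)"
proof -
  have w: "w \<in> carrier A" unfolding w_def using x y cM by simp
  show a0: "a0 \<in> carrier A" unfolding a0_def using w y by simp
  show b0: "b0 \<in> carrier A" unfolding b0_def using a0 w iM cM by simp
  have px: "p x \<in> carrier (A Mod I)" and py: "p y \<in> carrier (A Mod I)" using pc x y by auto
  have pw: "p w = p y \<otimes>\<^bsub>A Mod I\<^esub> p x" unfolding w_def using pMm x y by simp
  have "p a0 = (p x \<otimes>\<^bsub>A Mod I\<^esub> p y) \<otimes>\<^bsub>A Mod I\<^esub> inv\<^bsub>A Mod I\<^esub> p y"
    unfolding a0_def using w y px py pw Qc.m_comm[OF py px]
    by (simp add: pAm pAi del: mult_FactGroup one_FactGroup)
  also have "\<dots> = p x" using px py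
    by (simp add: Qc.m_assoc del: mult_FactGroup one_FactGroup)
  finally show "p a0 = p x" .
  show "p b0 = p y" unfolding b0_def using w a0 px py pw \<open>p a0 = p x\<close>
    by (simp add: pMm pMi iM Qc.m_assoc[symmetric] del: mult_FactGroup one_FactGroup)
       (simp add: Qc.m_comm[OF Qc.inv_closed[OF px] py] Qc.m_assoc del: mult_FactGroup one_FactGroup)
  have a0M: "a0 \<in> carrier M" and wM: "w \<in> carrier M" and yM: "y \<in> carrier M" using a0 w y cAM by auto
  have l: "brace_lambda A M a0 b0 = y"
  proof -
    have "a0 \<otimes>\<^bsub>M\<^esub> b0 = w" unfolding b0_def using a0M wM
      by (simp add: M.m_assoc[symmetric])
    hence "brace_lambda A M a0 b0 = inv\<^bsub>A\<^esub> a0 \<otimes>\<^bsub>A\<^esub> w" unfolding brace_lambda_def by simp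
    also have "\<dots> = (y \<otimes>\<^bsub>A\<^esub> inv\<^bsub>A\<^esub> w) \<otimes>\<^bsub>A\<^esub> w" unfolding a0_def using w y
      by (simp add: A.inv_mult_group)
    also have "\<dots> = y" using w y by (simp add: A.m_assoc)
    finally show ?thesis .
  qed
  have "(inv\<^bsub>M\<^esub> y \<otimes>\<^bsub>M\<^esub> a0) \<otimes>\<^bsub>M\<^esub> b0 = inv\<^bsub>M\<^esub> y \<otimes>\<^bsub>M\<^esub> w"
    unfolding b0_def using a0M wM yM by (simp add: M.m_assoc M.m_assoc[symmetric, of a0])
  also have "\<dots> = x" unfolding w_def using x y cAM M.inv_solve_left by (metis M.inv_closed M.m_closed)
  finally show "brace_solution A M (a0, b0) = (y, x)" unfolding brace_solution_def using l by simp
qed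


lemma image_block: assumes a: "a \<in> carrier A" and b: "b \<in> carrier A"
  shows "brace_solution A M ` ((a <#\<^bsub>M\<^esub> I) \<times> (b <#\<^bsub>M\<^esub> I)) = (b <#\<^bsub>M\<^esub> I) \<times> (a <#\<^bsub>M\<^esub> I)"
proof
  show "brace_solution A M ` ((a <#\<^bsub>M\<^esub> I) \<times> (b <#\<^bsub>M\<^esub> I)) \<subseteq> (b <#\<^bsub>M\<^esub> I) \<times> (a <#\<^bsub>M\<^esub> I)"
  proof (rule image_subsetI)
    fix z assume "z \<in> (a <#\<^bsub>M\<^esub> I) \<times> (b <#\<^bsub>M\<^esub> I)"
    then obtain a' b' where z: "z = (a', b')" and a': "a' \<in> a <#\<^bsub>M\<^esub> I" and b': "b' \<in> b <#\<^bsub>M\<^esub> I" by auto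
    have a'c: "a' \<in> carrier A" "p a' = p a" using a' mem_iff[OF a] by auto
    have b'c: "b' \<in> carrier A" "p b' = p b" using b' mem_iff[OF b] by auto
    have lc: "brace_lambda A M a' b' \<in> carrier A" unfolding brace_lambda_def using a'c b'c cM by simp
    have sc: "(inv\<^bsub>M\<^esub> (brace_lambda A M a' b') \<otimes>\<^bsub>M\<^esub> a') \<otimes>\<^bsub>M\<^esub> b' \<in> carrier A"
      using lc a'c b'c cM iM by simp
    show "brace_solution A M z \<in> (b <#\<^bsub>M\<^esub> I) \<times> (a <#\<^bsub>M\<^esub> I)"
      unfolding brace_solution_def z using fwd[OF a'c(1) b'c(1) a'c(2) b'c(2)] lc sc mem_iff a b
      by simp
  qed
next
  show "(b <#\<^bsub>M\<^esub> I) \<times> (a <#\<^bsub>M\<^esub> I) \<subseteq> brace_solution A M ` ((a <#\<^bsub>M\<^esub> I) \<times> (b <#\<^bsub>M\<^esub> I))"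
  proof (rule subsetI)
    fix z assume "z \<in> (b <#\<^bsub>M\<^esub> I) \<times> (a <#\<^bsub>M\<^esub> I)"
    then obtain y x where z: "z = (y, x)" and y: "y \<in> b <#\<^bsub>M\<^esub> I" and x: "x \<in> a <#\<^bsub>M\<^esub> I" by auto
    have yc: "y \<in> carrier A" "p y = p b" using y mem_iff[OF b] by auto
    have xc: "x \<in> carrier A" "p x = p a" using x mem_iff[OF a] by auto
    note B = bwd[OF yc(1) xc(1)]
    show "z \<in> brace_solution A M ` ((a <#\<^bsub>M\<^esub> I) \<times> (b <#\<^bsub>M\<^esub> I))"
      unfolding z apply (rule image_eqI[where f="brace_solution A M", OF B(5)[symmetric]])
      using B(1-4) xc yc mem_iff a b by simp
  qed
qed

lemma blocks: "{b <#\<^bsub>M\<^esub> I | b. b \<in> carrier A} = rcosets\<^bsub>M\<^esub> I"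
  unfolding RCOSETS_def using NM.coset_eq cAM by auto

lemma partition: "uniform_partition (carrier A) {b <#\<^bsub>M\<^esub> I | b. b \<in> carrier A}"
  unfolding uniform_partition_def blocks
proof (intro conjI ballI)
  show "partition_on (carrier A) (rcosets\<^bsub>M\<^esub> I)"
    unfolding partition_on_def
  proof (intro conjI)
    show "\<Union> (rcosets\<^bsub>M\<^esub> I) = carrier A" using M.rcosets_part_G[OF NM.subgroup_axioms] cAM by simp
    show "disjoint (rcosets\<^bsub>M\<^esub> I)" using M.rcos_disjoint[OF NM.subgroup_axioms] .
    show "{} \<notin> rcosets\<^bsub>M\<^esub> I" using NM.rcosets_non_empty by auto
  qed
next
  fix U V assume U: "U \<in> rcosets\<^bsub>M\<^esub> I" and V: "V \<in> rcosets\<^bsub>M\<^esub> I"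
  have "I \<approx> U" "I \<approx> V" unfolding eqpoll_def
    using M.card_cosets_equal[OF U NM.subset] M.card_cosets_equal[OF V NM.subset] by auto
  thus "U \<approx> V" using eqpoll_sym eqpoll_trans by blast
qed


lemma card2: assumes "I \<noteq> carrier A" "finite (carrier A)"
  shows "finite {b <#\<^bsub>M\<^esub> I | b. b \<in> carrier A} \<and> 2 \<le> card {b <#\<^bsub>M\<^esub> I | b. b \<in> carrier A}"
proof -
  let ?Q = "{b <#\<^bsub>M\<^esub> I | b. b \<in> carrier A}"
  have fin: "finite ?Q"
  proof (rule finite_subset[of _ "Pow (carrier A)"])
    show "?Q \<subseteq> Pow (carrier A)" using cos(2) A.r_coset_subset_G[OF NA.subset] by blast
  qed (use assms in simp)
  obtain b where b: "b \<in> carrier A" "b \<notin> I" using assms NA.subset by blast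
  have I1: "I = \<one>\<^bsub>A\<^esub> <#\<^bsub>M\<^esub> I" using M.lcos_mult_one[of I] NM.subset ones by simp
  have bin: "b \<in> b <#\<^bsub>M\<^esub> I" using b cAM unfolding l_coset_def
    by (force intro!: bexI[of _ "\<one>\<^bsub>M\<^esub>"] NM.one_closed)
  have sub: "{I, b <#\<^bsub>M\<^esub> I} \<subseteq> ?Q" using b I1 by auto
  have ne: "I \<noteq> b <#\<^bsub>M\<^esub> I" using bin b by auto
  have "card {I, b <#\<^bsub>M\<^esub> I} = 2" using ne by simp
  thus ?thesis using card_mono[OF fin sub] fin by simp
qed
end

theorem corollary4p15:
  fixes A M :: "'a monoid" and I :: "'a set"
  assumes "skew_brace A M"
    and "brace_ideal A M I"
    and "I \<noteq> carrier A"
    and "abelian_brace (A Mod I) (M Mod I)"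
  shows "uniformly_P_decomposable (carrier A) (brace_solution A M)
            {b <#\<^bsub>M\<^esub> I | b. b \<in> carrier A}
       \<and> (\<forall>b\<in>carrier A. \<forall>b'\<in>carrier A.
            brace_solution A M ` ((b <#\<^bsub>M\<^esub> I) \<times> (b' <#\<^bsub>M\<^esub> I))
              = (b' <#\<^bsub>M\<^esub> I) \<times> (b <#\<^bsub>M\<^esub> I))
       \<and> (\<forall>n. finite (carrier A) \<and> card {b <#\<^bsub>M\<^esub> I | b. b \<in> carrier A} = n
              \<longrightarrow> uniformly_n_decomposable (carrier A) (brace_solution A M) n)"
proof -
  interpret bctx A M I using assms by (simp add: bctx_def)
  have P: "uniformly_P_decomposable (carrier A) (brace_solution A M)
            {b <#\<^bsub>M\<^esub> I | b. b \<in> carrier A}"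
    unfolding uniformly_P_decomposable_def using partition image_block by blast
  show ?thesis
  proof (intro conjI allI impI ballI)
    show "uniformly_P_decomposable (carrier A) (brace_solution A M)
            {b <#\<^bsub>M\<^esub> I | b. b \<in> carrier A}" by (rule P)
  next
    fix b b' assume "b \<in> carrier A" "b' \<in> carrier A"
    thus "brace_solution A M ` ((b <#\<^bsub>M\<^esub> I) \<times> (b' <#\<^bsub>M\<^esub> I))
              = (b' <#\<^bsub>M\<^esub> I) \<times> (b <#\<^bsub>M\<^esub> I)" by (rule image_block)
  next
    fix n assume h: "finite (carrier A) \<and> card {b <#\<^bsub>M\<^esub> I | b. b \<in> carrier A} = n"
    thus "uniformly_n_decomposable (carrier A) (brace_solution A M) n"
      unfolding uniformly_n_decomposable_def using card2[OF assms(3)] P by blast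
  qed
qed

end
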